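(* Let $\tau=e^{2\pi i/3}$, $q_1(t)=-t-1$, $q_\tau(t)=-t-\tau$, $q_{\tau^2}(t)=-t-\tau^2$, and let $t(i,j)$ be defined on the vertices $a_{i,j}$ of the following labelled graph: vertices (row $1$: $a_{1,1}$; rows $2,3$: $a_{i,1},a_{i,2}$; for $i\ge4$, $1\le j\le\frac i2+1$ if $i$ even, $1\le j\le\frac{i-1}{2}+1$ if $i$ odd); edges $a_{1,1}\to a_{2,1}$ labelled $q_\tau$, $a_{1,1}\to a_{2,2}$ labelled $q_{\tau^2}$, and for $k\ge1$, $1\le j\le k+1$: $a_{2k,j}\to a_{2k+1,j}$ labelled $q_1$, $a_{2k+1,j}\to a_{2k+2,j}$ labelled $q_\tau$, $a_{2k+1,j}\to a_{2k+2,j+1}$ labelled $q_{\tau^2}$; $t(1,1)=-2$ and $t(i,j)$ is obtained from $-2$ by applying the maps labelling the edges along a directed path from $a_{1,1}$ to $a_{i,j}$. Then \[\frac{t(i,j)-1}{-2-\tau}=c(i,j)+d(i,j)\,\tau\in\mathbb{Z}[\tau],\] where $c(1,1)=1$, $d(1,1)=-1$, and for $i\ge2$: - if $i$ is even: for $j=1$, $c(i,1)=0$, $d(i,1)=\frac i2$; for $2\le j\le \frac i2+1$, $c(i,j)=-(j-1)$, $d(i,j)=\frac i2+1-j$; - if $i$ is odd: for $j=1$, $c(i,1)=1$, $d(i,1)=-\frac{i-1}{2}-1$; for $2\le j\le\frac{i-1}{2}+1$, $c(i,j)=1+(j-1)$, $d(i,j)=-\frac{i-1}{2}-1+(j-1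)$.
   Context: Here $\tau$ is a primitive cube root of unity, so $1+\tau+\tau^2=0$. In the paper, $t(i,j)$ is the parameter of the elliptic pencil at entry $a_{i,j}$ of a diagram of bifurcations of Cremona maps, the recursion above describing how the parameter changes. *)

theory Defs
  imports Complex_Main
begin

definition tau :: complex where
  "tau = cis (2 * pi / 3)"

definition q :: "complex \<Rightarrow> complex \<Rightarrow> complex" where
  "q c t = - t - c"

definition vertex :: "nat \<Rightarrow> nat \<Rightarrow> bool" where
  "vertex i j \<longleftrightarrow> (i = 1 \<and> j = 1)
     \<or> (i = 2 \<and> 1 \<le> j \<and> j \<le> 2)
     \<or> (i = 3 \<and> 1 \<le> j \<and> j \<le> 2)
     \<or> (i \<ge> 4 \<and> even i \<and> 1 \<le> j \<and> j \<le> i div 2 + 1)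
     \<or> (i \<ge> 4 \<and> odd i \<and> 1 \<le> j \<and> j \<le> (i - 1) div 2 + 1)"

definition edge :: "nat \<times> nat \<Rightarrow> nat \<times> nat \<Rightarrow> (complex \<Rightarrow> complex) \<Rightarrow> bool" where
  "edge u v f \<longleftrightarrow>
     (u = (1,1) \<and> v = (2,1) \<and> f = q tau)
   \<or> (u = (1,1) \<and> v = (2,2) \<and> f = q (tau^2))
   \<or> (\<exists>k j. k \<ge> 1 \<and> 1 \<le> j \<and> j \<le> k + 1 \<and>
        ((u = (2*k, j) \<and> v = (2*k+1, j) \<and> f = q 1)
       \<or> (u = (2*k+1, j) \<and> v = (2*k+2, j) \<and> f = q tau)
       \<or> (u = (2*k+1, j) \<and> v = (2*k+2, j+1) \<and> f = q (tau^2))))"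

inductive path_val :: "nat \<times> nat \<Rightarrow> complex \<Rightarrow> bool" where
  start: "path_val (1,1) (-2)"
| step: "path_val u x \<Longrightarrow> edge u v f \<Longrightarrow> path_val v (f x)"

definition cc :: "nat \<Rightarrow> nat \<Rightarrow> int" where
  "cc i j = (if i = 1 then 1
     else if even i then (if j = 1 then 0 else - (int j - 1))
     else (if j = 1 then 1 else 1 + (int j - 1)))"

definition dd :: "nat \<Rightarrow> nat \<Rightarrow> int" where
  "dd i j = (if i = 1 then -1
     else if even i then (if j = 1 then int i div 2 else int i div 2 + 1 - int j)
     else (if j = 1 then - ((int i - 1) div 2) - 1
           else - ((int i - 1) div 2) - 1 + (int j - 1)))"

end

theory Submission
  imports Defs
begin

lemma tau_eq: "tau = Complex (-1/2) (sqrt 3 / 2)"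
  unfolding tau_def by (simp add: cis.ctr cos_120 sin_120)

lemma tau2: "tau * tau = -1 - tau"
  by (simp add: tau_eq complex_eq_iff)

lemma tau2a: "tau * (tau * x) = - x - tau * x"
  by (metis mult.assoc tau2 left_diff_distrib mult_minus_left mult_1)

lemma s_nz: "-2 - tau \<noteq> 0"
  by (simp add: tau_eq complex_eq_iff)

definition T :: "nat \<Rightarrow> nat \<Rightarrow> complex" where
  "T i j = 1 + (-2 - tau) * (of_int (cc i j) + of_int (dd i j) * tau)"

lemma gen: "1 + (-2 - tau) * (of_int a + of_int b * tau) =
   1 + (-2 - tau) * of_int a + (of_int b) * (-2 * tau - tau * tau)"
  by (simp add: algebra_simps)

lemma step1: assumes "a' = 1 - a" "b' = -1 - b" shows "q 1 (1 + (-2 - tau) * (of_int a + of_int b * tau)) =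
   1 + (-2 - tau) * (of_int a' + of_int b' * tau)"
  unfolding assms of_int_diff of_int_minus q_def power2_eq_square by (simp add: algebra_simps tau2 tau2a)
  
lemma step2: assumes "a' = 1 - a" "b' = - b" shows "q tau (1 + (-2 - tau) * (of_int a + of_int b * tau)) =
   1 + (-2 - tau) * (of_int a' + of_int b' * tau)"
  unfolding assms of_int_diff of_int_minus q_def power2_eq_square by (simp add: algebra_simps tau2 tau2a)
  
lemma step3: assumes "a' = - a" "b' = -1 - b" shows "q (tau^2) (1 + (-2 - tau) * (of_int a + of_int b * tau)) =
   1 + (-2 - tau) * (of_int a' + of_int b' * tau)"
  unfolding assms of_int_diff of_int_minus q_def power2_eq_square by (simp add: algebra_simps tau2 tau2a)

lemma edge_T:
  assumes "edge u v f"
  shows "f (T (fst u) (snd u)) = T (fst v) (snd v)"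
  using assms unfolding edge_def
proof (elim disjE exE conjE)
  assume "u = (1,1)" "v = (2,1)" "f = q tau"
  then show ?thesis unfolding T_def by (simp add: cc_def dd_def q_def algebra_simps tau2)
next
  assume "u = (1,1)" "v = (2,2)" "f = q (tau^2)"
  then show ?thesis unfolding T_def by (simp add: cc_def dd_def q_def power2_eq_square algebra_simps tau2)
next
  fix k j assume h: "1 \<le> k" "1 \<le> j" "j \<le> k + 1" "u = (2*k, j)" "v = (2*k+1, j)" "f = q 1"
  show ?thesis unfolding h(4,5,6) T_def fst_conv snd_conv 
    apply (rule step1) using h by (auto simp add: cc_def dd_def)
next
  fix k j assume h: "1 \<le> k" "1 \<le> j" "j \<le> k + 1" "u = (2*k+1, j)" "v = (2*k+2, j)" "f = q tau"
  show ?thesis unfolding h(4,5,6) T_def fst_conv snd_conv 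
    apply (rule step2) using h by (auto simp add: cc_def dd_def)
next
  fix k j assume h: "1 \<le> k" "1 \<le> j" "j \<le> k + 1" "u = (2*k+1, j)" "v = (2*k+2, j+1)" "f = q (tau^2)"
  show ?thesis unfolding h(4,5,6) T_def fst_conv snd_conv 
    apply (rule step3) using h by (auto simp add: cc_def dd_def)
qed

lemma T11: "T 1 1 = -2"
  unfolding T_def cc_def dd_def by (simp add: algebra_simps tau2)

lemma path_T: "path_val u x \<Longrightarrow> x = T (fst u) (snd u)"
  by (induction rule: path_val.induct) (auto simp: T11[simplified] edge_T)

lemma reach_step: "path_val u x \<Longrightarrow> edge u v f \<Longrightarrow> \<exists>y. path_val v y"
  using path_val.step by blast

lemma reach: "vertex i j \<Longrightarrow> \<exists>x. path_val (i, j) x"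
proof (induction i arbitrary: j rule: less_induct)
  case (less i)
  have v: "vertex i j" by fact
  consider "i = 1" | "i = 2" | k where "k \<ge> 1" "i = 2*k+1" | k where "k \<ge> 1" "i = 2*k+2"
  proof -
    have "i \<ge> 1" using v unfolding vertex_def by auto
    then consider "i = 1" | "i = 2" | "i \<ge> 3" by linarith
    then show ?thesis
    proof cases
      case 3
      show ?thesis
      proof (cases "even i")
        case True
        then obtain m where "i = 2*m" by blast
        then show ?thesis using 3 that(4)[of "m - 1"] by auto
      next
        case False
        then obtain m where "i = 2*m+1" using oddE by blast
        then show ?thesis using 3 that(3)[of m] by auto
      qed
    qed (use that in auto)
  qed
  then show ?case
  proof cases
    case 1
    then have "j = 1" using v unfolding vertex_def by auto
    then show ?thesis using 1 path_val.start by blast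
  next
    case 2
    then have "j = 1 \<or> j = 2" using v unfolding vertex_def by auto
    moreover have "edge (1,1) (2,1) (q tau)" "edge (1,1) (2,2) (q (tau^2))"
      unfolding edge_def by auto
    ultimately show ?thesis using 2 reach_step path_val.start by blast
  next
    case 3
    then have j: "1 \<le> j" "j \<le> k + 1" using v unfolding vertex_def by auto
    have "vertex (2*k) j" using 3 j unfolding vertex_def by auto
    then obtain x where "path_val (2*k, j) x" using less.IH[of "2*k" j] 3 by auto
    moreover have "edge (2*k, j) (2*k+1, j) (q 1)" unfolding edge_def using 3 j by blast
    ultimately show ?thesis using 3 reach_step by blast
  next
    case 4
    then have j: "1 \<le> j" "j \<le> k + 2" using v unfolding vertex_def by auto
    show ?thesis
    proof (cases "j = 1")
      case True
      have "vertex (2*k+1) 1" using 4 unfolding vertex_def by auto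
      then obtain x where "path_val (2*k+1, 1) x" using less.IH[of "2*k+1" 1] 4 by auto
      moreover have "edge (2*k+1, 1) (2*k+2, 1) (q tau)" unfolding edge_def using 4 by auto
      ultimately show ?thesis using 4 True reach_step by blast
    next
      case False
      have "vertex (2*k+1) (j-1)" using 4 j False unfolding vertex_def by auto
      then obtain x where "path_val (2*k+1, j-1) x" using less.IH[of "2*k+1" "j-1"] 4 by auto
      moreover have "edge (2*k+1, j-1) (2*k+2, j-1+1) (q (tau^2))"
        unfolding edge_def using 4 j False by (intro disjI2 exI[of _ k] exI[of _ "j-1"]) auto
      ultimately have "\<exists>y. path_val (2*k+2, j-1+1) y" using reach_step by blast
      moreover have "j - 1 + 1 = j" using j by simp
      ultimately show ?thesis using 4 by simp
    qed
  qed
qed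

theorem mainTheorem3:
  assumes "vertex i j"
  shows "(\<exists>x. path_val (i, j) x) \<and>
         (\<forall>x. path_val (i, j) x \<longrightarrow>
              (x - 1) / (-2 - tau) = of_int (cc i j) + of_int (dd i j) * tau)"
proof
  show "\<exists>x. path_val (i, j) x" using reach assms by blast
  show "\<forall>x. path_val (i, j) x \<longrightarrow>
              (x - 1) / (-2 - tau) = of_int (cc i j) + of_int (dd i j) * tau"
  proof (intro allI impI)
    fix x assume "path_val (i, j) x"
    then have "x = T i j" using path_T by fastforce
    then show "(x - 1) / (-2 - tau) = of_int (cc i j) + of_int (dd i j) * tau"
      unfolding T_def using s_nz by simp
  qed
qed

end
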